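(* Let $(V,\mathscr{B},\mu)$ be a measure space with $\mu$ positive and $\sigma$-finite, $\mathscr{B}_{fin}=\{A\in\mathscr{B}:\mu(A)<\infty\}$, and $K^{(\mu)}(A,B)=\mu(A\cap B)$ for $A,B\in\mathscr{B}_{fin}$. Let $\mathscr{H}(K^{(\mu)})$ be the reproducing kernel Hilbert space of $K^{(\mu)}$ (a Hilbert space of real functions on $\mathscr{B}_{fin}$). Then a function $F:\mathscr{B}_{fin}\to\mathbb{R}$ belongs to $\mathscr{H}(K^{(\mu)})$ if and only if there exists $\varphi\in L^2(\mu)$ with $F(A)=\int_A\varphi\,d\mu$ for all $A\in\mathscr{B}_{fin}$ (i.e. $F$ is a signed measure, absolutely continuous with respect to $\mu$, with Radon–Nikodym derivative $dF/d\mu=\varphi\in L^2(\mu)$). In that case $\varphi$ is unique $\mu$-a.e. and $$\|F\|_{\mathscr{H}(K^{(\mu)})}=\Big\|\frac{dF}{d\mu}\Big\|_{L^2(\mu)}.$$ Moreover every $F\in\mathscr{H}(K^{(\mu)})$ is countably additive: if $A=\bigcup_{i=1}^\infty A_i$ with $A,A_i\in\mathscr{B}_{fin}$ pairwise disjoint, then $F(A)=\sum_{i=1}^\infty F(A_i)$; and $\mu(A)=0$ implies $F(A)=0$.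
   Context: For a p.d. kernel $K$ on a set $S$, $\mathscr{H}(K)$ denotes the unique Hilbert space of functions on $S$ such that $K(\cdot,s)\in\mathscr{H}(K)$ for all $s$ and $F(s)=\langle F,K(\cdot,s)\rangle_{\mathscr{H}(K)}$ for all $F\in\mathscr{H}(K)$, $s\in S$ (reproducing kernel Hilbert space, RKHS). All functions are real valued. *)

theory Defs
  imports "HOL-Analysis.Analysis"
begin

text \<open>Reproducing kernel Hilbert space of a kernel K on a set S, following the paper:
  a Hilbert space H of real functions on S (represented as functions that vanish outside S),
  with inner product ip, such that K(.,s) is in H for s in S and
  F(s) = <F, K(.,s)> for F in H and s in S.\<close>

definition is_rkhs ::
  "'s set \<Rightarrow> ('s \<Rightarrow> 's \<Rightarrow> real) \<Rightarrow> ('s \<Rightarrow> real) set \<Rightarrow> (('s \<Rightarrow> real) \<Rightarrow> ('s \<Rightarrow> real) \<Rightarrow> real) \<Rightarrow> bool"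
where
  "is_rkhs S K H ip \<longleftrightarrow>
     \<comment> \<open>H is a linear space of functions on S\<close>
     H \<subseteq> extensional S \<and>
     (\<lambda>x. 0) \<in> H \<and>
     (\<forall>f\<in>H. \<forall>g\<in>H. (\<lambda>x. f x + g x) \<in> H) \<and>
     (\<forall>c. \<forall>f\<in>H. (\<lambda>x. c * f x) \<in> H) \<and>
     \<comment> \<open>ip is an inner product on H\<close>
     (\<forall>f\<in>H. \<forall>g\<in>H. ip f g = ip g f) \<and>
     (\<forall>f\<in>H. \<forall>g\<in>H. \<forall>h\<in>H. ip (\<lambda>x. f x + g x) h = ip f h + ip g h) \<and>
     (\<forall>c. \<forall>f\<in>H. \<forall>g\<in>H. ip (\<lambda>x. c * f x) g = c * ip f g) \<and>
     (\<forall>f\<in>H. 0 \<le> ip f f) \<and>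
     (\<forall>f\<in>H. ip f f = 0 \<longrightarrow> f = (\<lambda>x. 0)) \<and>
     \<comment> \<open>completeness\<close>
     (\<forall>f :: nat \<Rightarrow> 's \<Rightarrow> real. (\<forall>n. f n \<in> H) \<and>
        (\<forall>e>0. \<exists>N. \<forall>m\<ge>N. \<forall>n\<ge>N. ip (\<lambda>x. f m x - f n x) (\<lambda>x. f m x - f n x) < e)
        \<longrightarrow> (\<exists>g\<in>H. (\<lambda>n. ip (\<lambda>x. f n x - g x) (\<lambda>x. f n x - g x)) \<longlonglongrightarrow> 0)) \<and>
     \<comment> \<open>kernel sections belong to H and the reproducing property\<close>
     (\<forall>s\<in>S. (\<lambda>t. if t \<in> S then K t s else 0) \<in> H) \<and>
     (\<forall>F\<in>H. \<forall>s\<in>S. F s = ip F (\<lambda>t. if t \<in> S then K t s else 0))"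

definition fin_sets :: "'a measure \<Rightarrow> 'a set set" where
  "fin_sets M = {A \<in> sets M. emeasure M A < \<infinity>}"

definition mu_kernel :: "'a measure \<Rightarrow> 'a set \<Rightarrow> 'a set \<Rightarrow> real" where
  "mu_kernel M A B = measure M (A \<inter> B)"

definition L2_density :: "'a measure \<Rightarrow> ('a set \<Rightarrow> real) \<Rightarrow> ('a \<Rightarrow> real) \<Rightarrow> bool" where
  "L2_density M F \<phi> \<longleftrightarrow> \<phi> \<in> borel_measurable M \<and> integrable M (\<lambda>x. (\<phi> x)\<^sup>2) \<and>
     (\<forall>A\<in>fin_sets M. F A = (LINT x:A|M. \<phi> x))"

end

theory Submission
  imports Defs
begin

definition L2 :: "'a measure \<Rightarrow> ('a \<Rightarrow> real) \<Rightarrow> bool" where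
  "L2 M f \<longleftrightarrow> f \<in> borel_measurable M \<and> integrable M (\<lambda>x. (f x)\<^sup>2)"

lemma L2_mult_integrable:
  assumes "L2 M f" "L2 M g" shows "integrable M (\<lambda>x. f x * g x)"
proof (rule Bochner_Integration.integrable_bound)
  show "integrable M (\<lambda>x. (f x)\<^sup>2 + (g x)\<^sup>2)" using assms unfolding L2_def by auto
  show "(\<lambda>x. f x * g x) \<in> borel_measurable M" using assms unfolding L2_def by auto
  show "AE x in M. norm (f x * g x) \<le> norm ((f x)\<^sup>2 + (g x)\<^sup>2)"
  proof (intro AE_I2)
    fix x
    have h: "0 \<le> (\<bar>f x\<bar> - \<bar>g x\<bar>)\<^sup>2" by simp
    have "2 * \<bar>f x * g x\<bar> \<le> (f x)\<^sup>2 + (g x)\<^sup>2"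
      using h by (simp add: power2_eq_square abs_mult algebra_simps abs_mult_self_eq)
    then show "norm (f x * g x) \<le> norm ((f x)\<^sup>2 + (g x)\<^sup>2)" by auto
  qed
qed

lemma L2_add: assumes "L2 M f" "L2 M g" shows "L2 M (\<lambda>x. f x + g x)"
proof -
  have "integrable M (\<lambda>x. 2 * (f x * g x))" using L2_mult_integrable[OF assms] by auto
  then have "integrable M (\<lambda>x. (f x)\<^sup>2 + (g x)\<^sup>2 + 2 * (f x * g x))"
    using assms unfolding L2_def by auto
  then show ?thesis using assms unfolding L2_def power2_sum by (simp add: mult.assoc borel_measurable_add)
qed

lemma L2_cmult: "L2 M f \<Longrightarrow> L2 M (\<lambda>x. c * f x)"
  unfolding L2_def power_mult_distrib by auto

lemma L2_diff: "L2 M f \<Longrightarrow> L2 M g \<Longrightarrow> L2 M (\<lambda>x. f x - g x)"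
  using L2_add[of M f "\<lambda>x. (-1) * g x"] L2_cmult[of M g "-1"] by simp

lemma L2_indicator: "A \<in> fin_sets M \<Longrightarrow> L2 M (indicator A)"
proof -
  assume A: "A \<in> fin_sets M"
  have e: "(\<lambda>x. (indicator A x :: real)\<^sup>2) = indicator A" by (auto simp: indicator_def fun_eq_iff)
  show ?thesis unfolding L2_def e using A unfolding fin_sets_def
    by (auto simp: integrable_indicator_iff)
qed

lemma L2_zero: "L2 M (\<lambda>x. 0)" unfolding L2_def by simp

lemma L2_sq_integrable: "L2 M f \<Longrightarrow> integrable M (\<lambda>x. (f x)\<^sup>2)" unfolding L2_def by simp

lemma quad_nonneg_imp:
  fixes a b c :: real
  assumes "\<And>t. 0 \<le> a - 2 * t * b + t\<^sup>2 * c" "0 \<le> c"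
  shows "b\<^sup>2 \<le> a * c"
proof (cases "c = 0")
  case True
  have "b = 0"
  proof (rule ccontr)
    assume "b \<noteq> 0"
    have "0 \<le> a - 2 * ((a + 1) / (2 * b)) * b" using assms(1)[of "(a+1)/(2*b)"] True by simp
    also have "\<dots> = -1" using \<open>b \<noteq> 0\<close> by (simp add: field_simps)
    finally show False by simp
  qed
  then show ?thesis using True by simp
next
  case False
  then have c: "c > 0" using assms(2) by simp
  have "0 \<le> a - 2 * (b / c) * b + (b / c)\<^sup>2 * c" by (rule assms(1))
  also have "\<dots> = a - b\<^sup>2 / c" using c by (simp add: field_simps power2_eq_square)
  finally have "b\<^sup>2 / c \<le> a" by simp
  then show ?thesis using c by (simp add: field_simps mult.commute)
qed

lemma L2_CS:
  assumes f: "L2 M f" and g: "L2 M g"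
  shows "(\<integral>x. f x * g x \<partial>M)\<^sup>2 \<le> (\<integral>x. (f x)\<^sup>2 \<partial>M) * (\<integral>x. (g x)\<^sup>2 \<partial>M)"
proof (rule quad_nonneg_imp)
  fix t :: real
  have i1: "integrable M (\<lambda>x. (f x)\<^sup>2)" "integrable M (\<lambda>x. (g x)\<^sup>2)" using f g by (auto simp: L2_def)
  have i2: "integrable M (\<lambda>x. f x * g x)" by (rule L2_mult_integrable[OF f g])
  have "0 \<le> (\<integral>x. (f x - t * g x)\<^sup>2 \<partial>M)" by simp
  also have "(\<integral>x. (f x - t * g x)\<^sup>2 \<partial>M) = (\<integral>x. (f x)\<^sup>2 - 2 * t * (f x * g x) + t\<^sup>2 * (g x)\<^sup>2 \<partial>M)"
    by (rule Bochner_Integration.integral_cong) (auto simp: power2_eq_square algebra_simps)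
  also have "\<dots> = (\<integral>x. (f x)\<^sup>2 \<partial>M) - 2 * t * (\<integral>x. f x * g x \<partial>M) + t\<^sup>2 * (\<integral>x. (g x)\<^sup>2 \<partial>M)"
    using i1 i2 by simp
  finally show "0 \<le> (\<integral>x. (f x)\<^sup>2 \<partial>M) - 2 * t * (\<integral>x. f x * g x \<partial>M) + t\<^sup>2 * (\<integral>x. (g x)\<^sup>2 \<partial>M)" .
qed simp

lemma L2_abs: "L2 M f \<Longrightarrow> L2 M (\<lambda>x. \<bar>f x\<bar>)"
  unfolding L2_def by auto

lemma (in sigma_finite_measure) L2_weight:
  obtains w where "L2 M w" "\<And>x. x \<in> space M \<Longrightarrow> 0 < w x" "\<And>x. 0 \<le> w x"
proof -
  obtain h where h: "h \<in> borel_measurable M" "integral\<^sup>N M h \<noteq> \<infinity>"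
    "\<And>x. x \<in> space M \<Longrightarrow> 0 < h x \<and> h x < \<infinity>"
    using Ex_finite_integrable_function by blast
  define w where "w x = sqrt (enn2real (h x))" for x
  have wm: "w \<in> borel_measurable M" unfolding w_def using h(1) by measurable
  have sq: "(w x)\<^sup>2 = enn2real (h x)" for x unfolding w_def by simp
  have "(\<integral>\<^sup>+x. ennreal (enn2real (h x)) \<partial>M) = integral\<^sup>N M h"
    by (intro nn_integral_cong) (use h(3) in \<open>auto simp: less_top ennreal_enn2real_if\<close>)
  then have "integrable M (\<lambda>x. enn2real (h x))"
    using h by (intro integrableI_nonneg) (auto simp: less_top)
  then have "L2 M w" unfolding L2_def sq using wm by simp
  moreover have "x \<in> space M \<Longrightarrow> 0 < w x" for x
    using h(3)[of x] unfolding w_def by (auto simp: enn2real_positive_iff less_top)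
  moreover have "0 \<le> w x" for x unfolding w_def by simp
  ultimately show ?thesis using that by blast
qed

lemma (in sigma_finite_measure) L2_complete:
  fixes f :: "nat \<Rightarrow> 'a \<Rightarrow> real"
  assumes L: "\<And>n. L2 M (f n)"
  and C: "\<And>e. e > 0 \<Longrightarrow> \<exists>N. \<forall>m\<ge>N. \<forall>n\<ge>N. (\<integral>x. (f m x - f n x)\<^sup>2 \<partial>M) < e"
  shows "\<exists>\<phi>. L2 M \<phi> \<and> (\<lambda>n. \<integral>x. (f n x - \<phi> x)\<^sup>2 \<partial>M) \<longlonglongrightarrow> 0"
proof -
  obtain w where w: "L2 M w" "\<And>x. x \<in> space M \<Longrightarrow> 0 < w x" "\<And>x. 0 \<le> w x"
    using L2_weight by blast
  define s where "s n x = f n x * w x" for n x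
  have si: "integrable M (s n)" for n unfolding s_def by (rule L2_mult_integrable[OF L w(1)])
  define W where "W = (\<integral>x. (w x)\<^sup>2 \<partial>M)"
  have W0: "0 \<le> W" unfolding W_def by simp
  have "\<exists>N. \<forall>i\<ge>N. \<forall>j\<ge>N. (LINT x|M. norm (s i x - s j x)) < e" if e: "e > 0" for e
  proof -
    obtain N where N: "\<And>m n. m \<ge> N \<Longrightarrow> n \<ge> N \<Longrightarrow> (\<integral>x. (f m x - f n x)\<^sup>2 \<partial>M) < e\<^sup>2 / (W + 1)"
      using C[of "e\<^sup>2 / (W + 1)"] e W0 by force
    have "(LINT x|M. norm (s i x - s j x)) < e" if "i \<ge> N" "j \<ge> N" for i j
    proof -
      have eq: "(LINT x|M. norm (s i x - s j x)) = (\<integral>x. \<bar>f i x - f j x\<bar> * w x \<partial>M)"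
      proof (intro Bochner_Integration.integral_cong refl)
        fix x
        have "f i x * w x - f j x * w x = (f i x - f j x) * w x" by (simp add: algebra_simps)
        then show "norm (s i x - s j x) = \<bar>f i x - f j x\<bar> * w x"
          unfolding s_def using w(3)[of x] by (simp add: abs_mult)
      qed
      have "(\<integral>x. \<bar>f i x - f j x\<bar> * w x \<partial>M)\<^sup>2 \<le> (\<integral>x. (\<bar>f i x - f j x\<bar>)\<^sup>2 \<partial>M) * W"
        unfolding W_def by (rule L2_CS[OF L2_abs[OF L2_diff[OF L L]] w(1)])
      also have "\<dots> = (\<integral>x. (f i x - f j x)\<^sup>2 \<partial>M) * W" by simp
      also have "\<dots> \<le> e\<^sup>2 / (W + 1) * W"
        using N[OF that] W0 by (intro mult_right_mono) auto
      also have "\<dots> < e\<^sup>2" using W0 e by (simp add: field_simps)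
      finally have "(\<integral>x. \<bar>f i x - f j x\<bar> * w x \<partial>M)\<^sup>2 < e\<^sup>2" .
      then have "\<bar>\<integral>x. \<bar>f i x - f j x\<bar> * w x \<partial>M\<bar> < e"
        using e power_less_imp_less_base[of "\<bar>\<integral>x. \<bar>f i x - f j x\<bar> * w x \<partial>M\<bar>" 2 e] by simp
      then show ?thesis unfolding eq by simp
    qed
    then show ?thesis by blast
  qed
  note cL1 = this
  obtain r where r: "strict_mono r" "AE x in M. Cauchy (\<lambda>i. s (r i) x)"
    using cauchy_L1_AE_cauchy_subseq[OF si cL1] by blast
  have "AE x in M. convergent (\<lambda>i. f (r i) x)"
  proof (rule AE_mp[OF r(2)], rule AE_I2, intro impI)
    fix x assume x: "x \<in> space M" and c: "Cauchy (\<lambda>i. s (r i) x)"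
    from c obtain L where Lx: "(\<lambda>i. s (r i) x) \<longlonglongrightarrow> L"
      using Cauchy_convergent_iff convergent_def by blast
    have "(\<lambda>i. s (r i) x / w x) \<longlonglongrightarrow> L / w x"
      using w(2)[OF x] by (intro tendsto_divide[OF Lx tendsto_const]) auto
    moreover have "s (r i) x / w x = f (r i) x" for i using w(2)[OF x] by (simp add: s_def)
    ultimately show "convergent (\<lambda>i. f (r i) x)" unfolding convergent_def by auto
  qed
  then obtain N where N: "\<And>x. x \<in> space M - N \<Longrightarrow> convergent (\<lambda>i. f (r i) x)" "N \<in> null_sets M"
    by (rule AE_E3) blast
  define \<phi> where "\<phi> x = (if x \<in> N then 0 else lim (\<lambda>i. f (r i) x))" for x
  have limx: "(\<lambda>i. f (r i) x) \<longlonglongrightarrow> \<phi> x" if "x \<in> space M - N" for x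
    using N(1)[OF that] that unfolding \<phi>_def by (simp add: convergent_LIMSEQ_iff)
  have Nsets: "N \<in> sets M" using N(2) by auto
  have fm: "f n \<in> borel_measurable M" for n using L[of n] unfolding L2_def by simp
  have \<phi>m: "\<phi> \<in> borel_measurable M"
  proof (rule borel_measurable_LIMSEQ_real[where u="\<lambda>i x. indicator (space M - N) x * f (r i) x"])
    fix x assume x: "x \<in> space M"
    show "(\<lambda>i. indicator (space M - N) x * f (r i) x) \<longlonglongrightarrow> \<phi> x"
    proof (cases "x \<in> N")
      case True then show ?thesis by (simp add: \<phi>_def)
    next
      case False then show ?thesis using limx[of x] x by simp
    qed
  next
    fix i show "(\<lambda>x. indicator (space M - N) x * f (r i) x) \<in> borel_measurable M"
      using Nsets fm by (intro borel_measurable_times) auto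
  qed
  have aelim: "AE x in M. (\<lambda>i. f (r i) x) \<longlonglongrightarrow> \<phi> x"
    by (rule AE_I'[OF N(2)]) (use limx in auto)
  have key: "\<exists>N0. \<forall>n\<ge>N0. integrable M (\<lambda>x. (f n x - \<phi> x)\<^sup>2) \<and> (\<integral>x. (f n x - \<phi> x)\<^sup>2 \<partial>M) \<le> e"
    if e: "e > 0" for e
  proof -
    obtain N0 where N0: "\<And>m n. m \<ge> N0 \<Longrightarrow> n \<ge> N0 \<Longrightarrow> (\<integral>x. (f m x - f n x)\<^sup>2 \<partial>M) < e"
      using C[OF e] by blast
    have "integrable M (\<lambda>x. (f n x - \<phi> x)\<^sup>2) \<and> (\<integral>x. (f n x - \<phi> x)\<^sup>2 \<partial>M) \<le> e" if n: "n \<ge> N0" for n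
    proof -
      define g where "g i x = ennreal ((f n x - f (r i) x)\<^sup>2)" for i x
      have gm: "g i \<in> borel_measurable M" for i unfolding g_def using fm by measurable
      have "(\<integral>\<^sup>+x. ennreal ((f n x - \<phi> x)\<^sup>2) \<partial>M) = (\<integral>\<^sup>+x. liminf (\<lambda>i. g i x) \<partial>M)"
      proof (rule nn_integral_cong_AE)
        show "AE x in M. ennreal ((f n x - \<phi> x)\<^sup>2) = liminf (\<lambda>i. g i x)"
          using aelim
        proof eventually_elim
          case (elim x)
          have "(\<lambda>i. g i x) \<longlonglongrightarrow> ennreal ((f n x - \<phi> x)\<^sup>2)"
            unfolding g_def by (intro tendsto_ennrealI tendsto_intros elim)
          then show ?case by (simp add: lim_imp_Liminf)
        qed
      qed
      also have "\<dots> \<le> liminf (\<lambda>i. integral\<^sup>N M (g i))"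
        by (rule nn_integral_liminf[OF gm])
      also have "\<dots> \<le> ennreal e"
      proof -
        have "eventually (\<lambda>i. integral\<^sup>N M (g i) \<le> ennreal e) sequentially"
        proof (rule eventually_sequentiallyI[of N0])
          fix i assume i: "N0 \<le> i"
          have ri: "N0 \<le> r i" using i seq_suble[OF r(1), of i] by simp
          have "integral\<^sup>N M (g i) = ennreal (\<integral>x. (f n x - f (r i) x)\<^sup>2 \<partial>M)"
            unfolding g_def
            by (rule nn_integral_eq_integral) (use L2_diff[OF L L] in \<open>auto simp: L2_def\<close>)
          also have "\<dots> \<le> ennreal e" using N0[OF n ri] by (intro ennreal_leI) simp
          finally show "integral\<^sup>N M (g i) \<le> ennreal e" .
        qed
        then have "limsup (\<lambda>i. integral\<^sup>N M (g i)) \<le> ennreal e" by (rule Limsup_bounded)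
        moreover have "liminf (\<lambda>i. integral\<^sup>N M (g i)) \<le> limsup (\<lambda>i. integral\<^sup>N M (g i))"
          by (rule Liminf_le_Limsup) simp
        ultimately show ?thesis by simp
      qed
      finally have le: "(\<integral>\<^sup>+x. ennreal ((f n x - \<phi> x)\<^sup>2) \<partial>M) \<le> ennreal e" .
      have im: "(\<lambda>x. (f n x - \<phi> x)\<^sup>2) \<in> borel_measurable M" using fm \<phi>m by measurable
      have int: "integrable M (\<lambda>x. (f n x - \<phi> x)\<^sup>2)"
        using le_less_trans[OF le ennreal_less_top] by (intro integrableI_nonneg[OF im]) auto
      have "ennreal (\<integral>x. (f n x - \<phi> x)\<^sup>2 \<partial>M) \<le> ennreal e"
        using le by (subst (asm) nn_integral_eq_integral[OF int]) auto
      then have "(\<integral>x. (f n x - \<phi> x)\<^sup>2 \<partial>M) \<le> e" using e by (simp add: ennreal_le_iff)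
      with int show ?thesis by simp
    qed
    then show ?thesis by blast
  qed
  obtain N1 where N1: "\<And>n. n \<ge> N1 \<Longrightarrow> integrable M (\<lambda>x. (f n x - \<phi> x)\<^sup>2)"
    using key[of 1] by auto
  have "L2 M (\<lambda>x. f N1 x - \<phi> x)" unfolding L2_def using N1[of N1] fm \<phi>m by auto
  then have "L2 M (\<lambda>x. f N1 x - (f N1 x - \<phi> x))" by (rule L2_diff[OF L])
  then have L\<phi>: "L2 M \<phi>" by simp
  have "(\<lambda>n. \<integral>x. (f n x - \<phi> x)\<^sup>2 \<partial>M) \<longlonglongrightarrow> 0"
  proof (rule LIMSEQ_I)
    fix e :: real assume e: "e > 0"
    obtain N0 where "\<forall>n\<ge>N0. integrable M (\<lambda>x. (f n x - \<phi> x)\<^sup>2) \<and> (\<integral>x. (f n x - \<phi> x)\<^sup>2 \<partial>M) \<le> e / 2"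
      using key[of "e/2"] e by auto
    then show "\<exists>no. \<forall>n\<ge>no. norm ((\<integral>x. (f n x - \<phi> x)\<^sup>2 \<partial>M) - 0) < e"
      using e by (intro exI[of _ N0]) auto
  qed
  with L\<phi> show ?thesis by blast
qed

fun psi :: "(real \<times> 'a set) list \<Rightarrow> 'a \<Rightarrow> real" where
  "psi [] x = 0"
| "psi ((c, B) # rs) x = c * indicator B x + psi rs x"

definition valid :: "'a measure \<Rightarrow> (real \<times> 'a set) list \<Rightarrow> bool" where
  "valid M rs \<longleftrightarrow> (\<forall>p\<in>set rs. snd p \<in> fin_sets M)"

definition scl :: "real \<Rightarrow> (real \<times> 'a set) list \<Rightarrow> (real \<times> 'a set) list" where
  "scl a rs = map (\<lambda>(c, B). (a * c, B)) rs"

fun ell :: "('a set \<Rightarrow> real) \<Rightarrow> (real \<times> 'a set) list \<Rightarrow> real" where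
  "ell F [] = 0"
| "ell F ((c, B) # rs) = c * F B + ell F rs"

definition kk :: "'a measure \<Rightarrow> 'a set \<Rightarrow> 'a set \<Rightarrow> real" where
  "kk M B = (\<lambda>t. if t \<in> fin_sets M then mu_kernel M t B else 0)"

fun gr :: "'a measure \<Rightarrow> (real \<times> 'a set) list \<Rightarrow> 'a set \<Rightarrow> real" where
  "gr M [] = (\<lambda>t. 0)"
| "gr M ((c, B) # rs) = (\<lambda>t. c * kk M B t + gr M rs t)"

lemma psi_append: "psi (rs @ ss) x = psi rs x + psi ss x"
  by (induction rs) auto

lemma psi_scl: "psi (scl a rs) x = a * psi rs x"
  unfolding scl_def by (induction rs) (auto simp: algebra_simps)

lemma ell_append: "ell F (rs @ ss) = ell F rs + ell F ss"
  by (induction rs) auto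

lemma ell_scl: "ell F (scl a rs) = a * ell F rs"
  unfolding scl_def by (induction rs) (auto simp: algebra_simps)

lemma valid_append: "valid M (rs @ ss) \<longleftrightarrow> valid M rs \<and> valid M ss"
  unfolding valid_def by auto

lemma valid_scl: "valid M (scl a rs) \<longleftrightarrow> valid M rs"
  unfolding valid_def scl_def by auto

lemma valid_Cons: "valid M ((c, B) # rs) \<longleftrightarrow> B \<in> fin_sets M \<and> valid M rs"
  unfolding valid_def by auto

lemma valid_Nil: "valid M []" unfolding valid_def by simp

lemma L2_psi: "valid M rs \<Longrightarrow> L2 M (psi rs)"
proof (induction rs)
  case Nil then show ?case using L2_zero by simp
next
  case (Cons p rs)
  obtain c B where p: "p = (c, B)" by force
  have "L2 M (\<lambda>x. c * indicator B x + psi rs x)"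
    using Cons p by (intro L2_add L2_cmult L2_indicator) (auto simp: valid_Cons)
  then show ?case using p by simp
qed

lemma fin_sets_inter: "A \<in> fin_sets M \<Longrightarrow> B \<in> fin_sets M \<Longrightarrow> A \<inter> B \<in> fin_sets M"
  unfolding fin_sets_def by (auto intro: le_less_trans[OF emeasure_mono])

lemma int_ind_ind:
  assumes "A \<in> fin_sets M" "B \<in> fin_sets M"
  shows "(\<integral>x. indicator A x * indicator B x \<partial>M) = measure M (A \<inter> B)"
proof -
  have "(\<integral>x. indicator A x * indicator B x \<partial>M) = (\<integral>x. indicator (A \<inter> B) x \<partial>M :: real)"
    by (simp add: indicator_inter_arith)
  also have "\<dots> = measure M (A \<inter> B)"
    using assms unfolding fin_sets_def by (simp add: Int_absorb2 sets.Int sets.sets_into_space le_infI1)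
  finally show ?thesis .
qed

lemma int_ind_psi:
  assumes A: "A \<in> fin_sets M" and v: "valid M rs"
  shows "(\<integral>x. indicator A x * psi rs x \<partial>M) = gr M rs A"
  using v
proof (induction rs)
  case Nil then show ?case by simp
next
  case (Cons p rs)
  obtain c B where p: "p = (c, B)" by force
  have B: "B \<in> fin_sets M" and v': "valid M rs" using Cons.prems p by (auto simp: valid_Cons)
  have i1: "integrable M (\<lambda>x. indicator A x * indicator B x :: real)"
    by (rule L2_mult_integrable[OF L2_indicator[OF A] L2_indicator[OF B]])
  have i2: "integrable M (\<lambda>x. indicator A x * psi rs x)"
    by (rule L2_mult_integrable[OF L2_indicator[OF A] L2_psi[OF v']])
  have "(\<integral>x. indicator A x * psi (p # rs) x \<partial>M)
      = (\<integral>x. c * (indicator A x * indicator B x) + indicator A x * psi rs x \<partial>M)"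
    unfolding p by (simp add: algebra_simps)
  also have "\<dots> = c * measure M (A \<inter> B) + gr M rs A"
    using i1 i2 Cons.IH[OF v'] int_ind_ind[OF A B] by simp
  also have "\<dots> = gr M (p # rs) A"
    using A unfolding p by (simp add: kk_def mu_kernel_def)
  finally show ?case .
qed

lemma int_psi_psi:
  assumes v: "valid M rs" "valid M ss"
  shows "(\<integral>x. psi rs x * psi ss x \<partial>M) = ell (gr M ss) rs"
  using v(1)
proof (induction rs)
  case Nil then show ?case by simp
next
  case (Cons p rs)
  obtain c B where p: "p = (c, B)" by force
  have B: "B \<in> fin_sets M" and v': "valid M rs" using Cons.prems p by (auto simp: valid_Cons)
  have i1: "integrable M (\<lambda>x. indicator B x * psi ss x :: real)"
    by (rule L2_mult_integrable[OF L2_indicator[OF B] L2_psi[OF v(2)]])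
  have i2: "integrable M (\<lambda>x. psi rs x * psi ss x)"
    by (rule L2_mult_integrable[OF L2_psi[OF v'] L2_psi[OF v(2)]])
  have "(\<integral>x. psi (p # rs) x * psi ss x \<partial>M)
      = (\<integral>x. c * (indicator B x * psi ss x) + psi rs x * psi ss x \<partial>M)"
    unfolding p by (simp add: algebra_simps)
  also have "\<dots> = c * gr M ss B + ell (gr M ss) rs"
    using i1 i2 Cons.IH[OF v'] int_ind_psi[OF B v(2)] by simp
  finally show ?case using p by simp
qed

lemma psi_map: "psi (map (\<lambda>c. (c, B c)) xs) x = (\<Sum>c\<leftarrow>xs. c * indicator (B c) x)"
  by (induction xs) auto

lemma simple_rep:
  fixes s :: "'a \<Rightarrow> real"
  assumes s: "simple_function M s" and \<phi>: "L2 M \<phi>"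
    and bd: "\<And>x. x \<in> space M \<Longrightarrow> \<bar>s x\<bar> \<le> 2 * \<bar>\<phi> x\<bar>"
  shows "\<exists>rs. valid M rs \<and> (\<forall>x\<in>space M. psi rs x = s x)"
proof -
  define V where "V = s ` space M - {0}"
  have fin: "finite V" using simple_functionD(1)[OF s] unfolding V_def by simp
  obtain xs where xs: "set xs = V" "distinct xs" using finite_distinct_list[OF fin] by blast
  define B where "B c = s -` {c} \<inter> space M" for c
  define rs where "rs = map (\<lambda>c. (c, B c)) xs"
  have Bs: "B c \<in> sets M" for c unfolding B_def by (rule simple_functionD(2)[OF s])
  have \<phi>i: "integrable M (\<lambda>x. 4 * (\<phi> x)\<^sup>2)" using \<phi> unfolding L2_def by simp
  have fin_B: "B c \<in> fin_sets M" if c: "c \<in> V" for c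
  proof -
    have c0: "c \<noteq> 0" using c unfolding V_def by simp
    have "ennreal (c\<^sup>2) * emeasure M (B c) = (\<integral>\<^sup>+x. ennreal (c\<^sup>2) * indicator (B c) x \<partial>M)"
      by (rule nn_integral_cmult_indicator[symmetric, OF Bs])
    also have "\<dots> \<le> (\<integral>\<^sup>+x. ennreal (4 * (\<phi> x)\<^sup>2) \<partial>M)"
    proof (rule nn_integral_mono)
      fix x assume x: "x \<in> space M"
      show "ennreal (c\<^sup>2) * indicator (B c) x \<le> ennreal (4 * (\<phi> x)\<^sup>2)"
      proof (cases "x \<in> B c")
        case True
        then have "s x = c" unfolding B_def by simp
        then have "\<bar>c\<bar> \<le> 2 * \<bar>\<phi> x\<bar>" using bd[OF x] by simp
        then have "\<bar>c\<bar>\<^sup>2 \<le> (2 * \<bar>\<phi> x\<bar>)\<^sup>2"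
          by (rule power_mono[OF _ abs_ge_zero])
        then have "c\<^sup>2 \<le> 4 * (\<phi> x)\<^sup>2" by (simp add: power_mult_distrib)
        then have "ennreal (c\<^sup>2) \<le> ennreal (4 * (\<phi> x)\<^sup>2)" by (rule ennreal_leI)
        then show ?thesis using True by simp
      qed simp
    qed
    also have "\<dots> = ennreal (\<integral>x. 4 * (\<phi> x)\<^sup>2 \<partial>M)"
      by (rule nn_integral_eq_integral[OF \<phi>i]) simp
    also have "\<dots> < \<infinity>" by simp
    finally have lt: "ennreal (c\<^sup>2) * emeasure M (B c) < \<infinity>" .
    have cp: "ennreal (c\<^sup>2) \<noteq> 0" using c0 by simp
    have "emeasure M (B c) \<noteq> \<infinity>"
    proof
      assume "emeasure M (B c) = \<infinity>"
      then have "ennreal (c\<^sup>2) * emeasure M (B c) = \<infinity>" using cp by (simp add: ennreal_mult_top)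
      with lt show False by simp
    qed
    then have "emeasure M (B c) < \<infinity>" by (simp add: less_top)
    then show ?thesis using Bs unfolding fin_sets_def by simp
  qed
  have "valid M rs" unfolding valid_def rs_def using fin_B xs(1) by (simp add: image_iff)
  moreover have "psi rs x = s x" if x: "x \<in> space M" for x
  proof -
    have "psi rs x = (\<Sum>c\<leftarrow>xs. c * indicator (B c) x)" unfolding rs_def by (rule psi_map)
    also have "\<dots> = (\<Sum>c\<in>V. c * indicator (B c) x)"
      using xs by (simp add: sum_list_distinct_conv_sum_set)
    also have "\<dots> = (\<Sum>c\<in>V. if c = s x then c else 0)"
      by (intro sum.cong refl) (simp add: B_def x indicator_def)
    also have "\<dots> = s x"
      using fin x unfolding V_def by (simp add: sum.delta')
    finally show ?thesis .
  qed
  ultimately show ?thesis by blast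
qed

lemma L2_approx:
  assumes \<phi>: "L2 M \<phi>"
  shows "\<exists>rs. (\<forall>n. valid M (rs n)) \<and> (\<lambda>n. \<integral>x. (psi (rs n) x - \<phi> x)\<^sup>2 \<partial>M) \<longlonglongrightarrow> 0"
proof -
  have \<phi>m: "\<phi> \<in> borel_measurable M" using \<phi> unfolding L2_def by simp
  obtain s where s: "\<And>i. simple_function M (s i)" "\<And>x. x \<in> space M \<Longrightarrow> (\<lambda>i. s i x) \<longlonglongrightarrow> \<phi> x"
    "\<And>i x. x \<in> space M \<Longrightarrow> dist (s i x) 0 \<le> 2 * dist (\<phi> x) 0"
    using borel_measurable_implies_sequence_metric[OF \<phi>m, of 0] by blast
  have bd: "\<And>i x. x \<in> space M \<Longrightarrow> \<bar>s i x\<bar> \<le> 2 * \<bar>\<phi> x\<bar>" using s(3) by simp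
  have "\<forall>i. \<exists>rs. valid M rs \<and> (\<forall>x\<in>space M. psi rs x = s i x)"
    using simple_rep[OF s(1) \<phi> bd] by blast
  then have "\<exists>rs. \<forall>i. valid M (rs i) \<and> (\<forall>x\<in>space M. psi (rs i) x = s i x)"
    by (rule choice)
  then obtain rs where rs0: "\<forall>i. valid M (rs i) \<and> (\<forall>x\<in>space M. psi (rs i) x = s i x)"
    by blast
  then have rs: "\<And>i. valid M (rs i)" "\<And>i x. x \<in> space M \<Longrightarrow> psi (rs i) x = s i x"
    by auto
  have eq: "(\<integral>x. (psi (rs i) x - \<phi> x)\<^sup>2 \<partial>M) = (\<integral>x. (s i x - \<phi> x)\<^sup>2 \<partial>M)" for i
    by (intro Bochner_Integration.integral_cong) (auto simp: rs(2))
  have "(\<lambda>i. \<integral>x. (s i x - \<phi> x)\<^sup>2 \<partial>M) \<longlonglongrightarrow> (\<integral>x. 0 \<partial>M)"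
  proof (rule integral_dominated_convergence[where w="\<lambda>x. 9 * (\<phi> x)\<^sup>2"])
    show "(\<lambda>x. 0::real) \<in> borel_measurable M" by simp
    show "(\<lambda>x. (s i x - \<phi> x)\<^sup>2) \<in> borel_measurable M" for i
      using borel_measurable_simple_function[OF s(1)] \<phi>m by measurable
    show "integrable M (\<lambda>x. 9 * (\<phi> x)\<^sup>2)" using \<phi> unfolding L2_def by simp
    show "AE x in M. (\<lambda>i. (s i x - \<phi> x)\<^sup>2) \<longlonglongrightarrow> 0"
    proof (rule AE_I2)
      fix x assume x: "x \<in> space M"
      have "(\<lambda>i. (s i x - \<phi> x)\<^sup>2) \<longlonglongrightarrow> (\<phi> x - \<phi> x)\<^sup>2"
        by (intro tendsto_intros s(2)[OF x])
      then show "(\<lambda>i. (s i x - \<phi> x)\<^sup>2) \<longlonglongrightarrow> 0" by simp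
    qed
    show "AE x in M. norm ((s i x - \<phi> x)\<^sup>2) \<le> 9 * (\<phi> x)\<^sup>2" for i
    proof (rule AE_I2)
      fix x assume x: "x \<in> space M"
      have "\<bar>s i x - \<phi> x\<bar> \<le> 3 * \<bar>\<phi> x\<bar>" using bd[OF x, of i] by simp
      then have "\<bar>s i x - \<phi> x\<bar>\<^sup>2 \<le> (3 * \<bar>\<phi> x\<bar>)\<^sup>2"
        by (rule power_mono[OF _ abs_ge_zero])
      then show "norm ((s i x - \<phi> x)\<^sup>2) \<le> 9 * (\<phi> x)\<^sup>2" by (simp add: power_mult_distrib)
    qed
  qed
  then have "(\<lambda>i. \<integral>x. (psi (rs i) x - \<phi> x)\<^sup>2 \<partial>M) \<longlonglongrightarrow> 0" unfolding eq by simp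
  with rs(1) show ?thesis by blast
qed

lemma sq_bound_tendsto:
  fixes x :: "nat \<Rightarrow> real"
  assumes d: "d \<longlonglongrightarrow> 0" and C: "0 \<le> C" and b: "\<And>n. (x n - y)\<^sup>2 \<le> C * d n"
  shows "x \<longlonglongrightarrow> y"
proof (rule LIM_zero_cancel, rule Lim_null_comparison)
  show "\<forall>\<^sub>F n in sequentially. norm (x n - y) \<le> sqrt (C * d n)"
  proof (rule always_eventually, rule allI)
    fix n
    have "sqrt ((x n - y)\<^sup>2) \<le> sqrt (C * d n)" by (rule real_sqrt_le_mono[OF b])
    then show "norm (x n - y) \<le> sqrt (C * d n)" by simp
  qed
  have "(\<lambda>n. sqrt (C * d n)) \<longlonglongrightarrow> sqrt (C * 0)" by (intro tendsto_intros d)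
  then show "(\<lambda>n. sqrt (C * d n)) \<longlonglongrightarrow> 0" by simp
qed

lemma gr_append: "gr M (rs @ ss) t = gr M rs t + gr M ss t"
  by (induction rs) auto

lemma gr_scl: "gr M (scl a rs) t = a * gr M rs t"
  unfolding scl_def by (induction rs) (auto simp: algebra_simps)

locale rk =
  fixes M :: "'a measure" and H :: "('a set \<Rightarrow> real) set"
    and ip :: "('a set \<Rightarrow> real) \<Rightarrow> ('a set \<Rightarrow> real) \<Rightarrow> real"
  assumes sf: "sigma_finite_measure M"
    and rk: "is_rkhs (fin_sets M) (mu_kernel M) H ip"
begin

lemma H_ext: "H \<subseteq> extensional (fin_sets M)" using rk unfolding is_rkhs_def by blast
lemma H_zero: "(\<lambda>x. 0) \<in> H" using rk unfolding is_rkhs_def by blast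
lemma H_add: "f \<in> H \<Longrightarrow> g \<in> H \<Longrightarrow> (\<lambda>x. f x + g x) \<in> H" using rk unfolding is_rkhs_def by blast
lemma H_smult: "f \<in> H \<Longrightarrow> (\<lambda>x. c * f x) \<in> H" using rk unfolding is_rkhs_def by blast
lemma ip_sym: "f \<in> H \<Longrightarrow> g \<in> H \<Longrightarrow> ip f g = ip g f" using rk unfolding is_rkhs_def by blast
lemma ip_add: "f \<in> H \<Longrightarrow> g \<in> H \<Longrightarrow> h \<in> H \<Longrightarrow> ip (\<lambda>x. f x + g x) h = ip f h + ip g h"
  using rk unfolding is_rkhs_def by blast
lemma ip_smult: "f \<in> H \<Longrightarrow> g \<in> H \<Longrightarrow> ip (\<lambda>x. c * f x) g = c * ip f g"
  using rk unfolding is_rkhs_def by blast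
lemma ip_pos: "f \<in> H \<Longrightarrow> 0 \<le> ip f f" using rk unfolding is_rkhs_def by blast
lemma H_complete:
  "(\<forall>n. f n \<in> H) \<Longrightarrow> (\<forall>e>0. \<exists>N. \<forall>m\<ge>N. \<forall>n\<ge>N. ip (\<lambda>x. f m x - f n x) (\<lambda>x. f m x - f n x) < e)
   \<Longrightarrow> (\<exists>g\<in>H. (\<lambda>n. ip (\<lambda>x. f n x - g x) (\<lambda>x. f n x - g x)) \<longlonglongrightarrow> 0)"
  using rk unfolding is_rkhs_def by blast
lemma kk_H: "B \<in> fin_sets M \<Longrightarrow> kk M B \<in> H" using rk unfolding is_rkhs_def kk_def by blast
lemma reprod: "F \<in> H \<Longrightarrow> s \<in> fin_sets M \<Longrightarrow> F s = ip F (kk M s)"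
  using rk unfolding is_rkhs_def kk_def by blast

lemma H_diff: assumes "f \<in> H" "g \<in> H" shows "(\<lambda>x. f x - g x) \<in> H"
proof -
  have "(\<lambda>x. f x + (\<lambda>x. (-1) * g x) x) \<in> H" using assms by (intro H_add H_smult)
  then show ?thesis by simp
qed

lemma ip_add2: "f \<in> H \<Longrightarrow> g \<in> H \<Longrightarrow> h \<in> H \<Longrightarrow> ip h (\<lambda>x. f x + g x) = ip h f + ip h g"
  using ip_sym ip_add H_add by metis

lemma ip_smult2: "f \<in> H \<Longrightarrow> g \<in> H \<Longrightarrow> ip g (\<lambda>x. c * f x) = c * ip g f"
  using ip_sym ip_smult H_smult by metis

lemma ip_lin:
  assumes a: "a \<in> H" and b: "b \<in> H"
  shows "ip (\<lambda>x. a x + s * b x) (\<lambda>x. a x + s * b x) = ip a a + 2 * s * ip a b + s\<^sup>2 * ip b b"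
proof -
  define u where "u = (\<lambda>x. s * b x)"
  have u: "u \<in> H" unfolding u_def using b by (rule H_smult)
  have au: "(\<lambda>x. a x + u x) \<in> H" using a u by (rule H_add)
  have "ip (\<lambda>x. a x + u x) (\<lambda>x. a x + u x) = ip a (\<lambda>x. a x + u x) + ip u (\<lambda>x. a x + u x)"
    by (rule ip_add[OF a u au])
  also have "\<dots> = ip a a + ip a u + (ip u a + ip u u)"
    using ip_add2[OF a u a] ip_add2[OF a u u] by simp
  also have "ip a u = s * ip a b" unfolding u_def by (rule ip_smult2[OF b a])
  also have "ip u a = s * ip a b" unfolding u_def using ip_smult[OF b a] ip_sym[OF a b] by simp
  also have "ip u u = s * (s * ip b b)" unfolding u_def using ip_smult[OF b u] ip_smult2[OF b b] u_def by simp
  finally show ?thesis unfolding u_def by (simp add: power2_eq_square algebra_simps)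
qed

lemma ip_CS:
  assumes f: "f \<in> H" and g: "g \<in> H"
  shows "(ip f g)\<^sup>2 \<le> ip f f * ip g g"
proof (rule quad_nonneg_imp)
  fix t
  have "0 \<le> ip (\<lambda>x. f x + (-t) * g x) (\<lambda>x. f x + (-t) * g x)"
    using f g by (intro ip_pos H_add H_smult)
  also have "\<dots> = ip f f - 2 * t * ip f g + t\<^sup>2 * ip g g" using ip_lin[OF f g, of "-t"] by simp
  finally show "0 \<le> ip f f - 2 * t * ip f g + t\<^sup>2 * ip g g" .
qed (rule ip_pos[OF g])

lemma ip_zero1: "h \<in> H \<Longrightarrow> ip (\<lambda>x. 0) h = 0"
  using ip_smult[of h h 0] by simp

lemma ip_kk: "B \<in> fin_sets M \<Longrightarrow> h \<in> H \<Longrightarrow> ip (kk M B) h = h B"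
  using ip_sym[OF kk_H] reprod by metis

lemma gr_H: "valid M rs \<Longrightarrow> gr M rs \<in> H"
proof (induction rs)
  case Nil then show ?case using H_zero by simp
next
  case (Cons p rs)
  obtain c B where p: "p = (c, B)" by force
  have "(\<lambda>t. c * kk M B t + gr M rs t) \<in> H"
    using Cons p by (intro H_add H_smult kk_H) (auto simp: valid_Cons)
  then show ?case using p by simp
qed

lemma ip_gr: "valid M rs \<Longrightarrow> h \<in> H \<Longrightarrow> ip (gr M rs) h = ell h rs"
proof (induction rs)
  case Nil then show ?case using ip_zero1 by simp
next
  case (Cons p rs)
  obtain c B where p: "p = (c, B)" by force
  have B: "B \<in> fin_sets M" and v: "valid M rs" using Cons.prems p by (auto simp: valid_Cons)
  have k1: "(\<lambda>t. c * kk M B t) \<in> H" using B by (intro H_smult kk_H)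
  have "ip (gr M (p # rs)) h = ip (\<lambda>t. (\<lambda>t. c * kk M B t) t + gr M rs t) h" using p by simp
  also have "\<dots> = ip (\<lambda>t. c * kk M B t) h + ip (gr M rs) h"
    by (rule ip_add[OF k1 gr_H[OF v] Cons.prems(2)])
  also have "\<dots> = c * h B + ell h rs"
    using ip_smult[OF kk_H[OF B] Cons.prems(2)] ip_kk[OF B Cons.prems(2)] Cons.IH[OF v Cons.prems(2)]
    by simp
  finally show ?case using p by simp
qed

lemma ip_gr_gr: "valid M rs \<Longrightarrow> ip (gr M rs) (gr M rs) = (\<integral>x. (psi rs x)\<^sup>2 \<partial>M)"
  using ip_gr[OF _ gr_H] int_psi_psi[of M rs rs] by (simp add: power2_eq_square)

lemma gr_diff_eq: "(\<lambda>x. gr M r x - gr M s x) = gr M (r @ scl (-1) s)"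
  by (auto simp: gr_append gr_scl fun_eq_iff)

lemma psi_diff_eq: "psi (r @ scl (-1) s) x = psi r x - psi s x"
  by (simp add: psi_append psi_scl)

lemma ip_gr_diff:
  assumes "valid M r" "valid M s"
  shows "ip (\<lambda>x. gr M r x - gr M s x) (\<lambda>x. gr M r x - gr M s x) = (\<integral>x. (psi r x - psi s x)\<^sup>2 \<partial>M)"
  unfolding gr_diff_eq using assms
  by (subst ip_gr_gr) (auto simp: valid_append valid_scl psi_diff_eq)

end

lemma L2_ind_diff_bound:
  assumes A: "A \<in> fin_sets M" and f: "L2 M f" and g: "L2 M g"
  shows "((\<integral>x. indicator A x * f x \<partial>M) - (\<integral>x. indicator A x * g x \<partial>M))\<^sup>2
     \<le> measure M A * (\<integral>x. (f x - g x)\<^sup>2 \<partial>M)"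
proof -
  have i1: "integrable M (\<lambda>x. indicator A x * f x)" by (rule L2_mult_integrable[OF L2_indicator[OF A] f])
  have i2: "integrable M (\<lambda>x. indicator A x * g x)" by (rule L2_mult_integrable[OF L2_indicator[OF A] g])
  have "(\<integral>x. indicator A x * f x \<partial>M) - (\<integral>x. indicator A x * g x \<partial>M) = (\<integral>x. indicator A x * (f x - g x) \<partial>M)"
    using i1 i2 by (simp add: right_diff_distrib)
  moreover have "(\<integral>x. indicator A x * (f x - g x) \<partial>M)\<^sup>2 \<le> (\<integral>x. (indicator A x)\<^sup>2 \<partial>M) * (\<integral>x. (f x - g x)\<^sup>2 \<partial>M)"
    by (rule L2_CS[OF L2_indicator[OF A] L2_diff[OF f g]])
  moreover have "(\<integral>x. (indicator A x)\<^sup>2 \<partial>M) = measure M A"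
    using int_ind_ind[OF A A] by (simp add: power2_eq_square)
  ultimately show ?thesis by simp
qed

lemma L2_sq_tendsto:
  assumes f: "\<And>n. L2 M (f n)" and g: "L2 M g" and d: "(\<lambda>n. \<integral>x. (f n x - g x)\<^sup>2 \<partial>M) \<longlonglongrightarrow> 0"
  shows "(\<lambda>n. \<integral>x. (f n x)\<^sup>2 \<partial>M) \<longlonglongrightarrow> (\<integral>x. (g x)\<^sup>2 \<partial>M)"
proof -
  let ?d = "\<lambda>n. \<integral>x. (f n x - g x)\<^sup>2 \<partial>M"
  let ?c = "\<lambda>n. \<integral>x. (f n x - g x) * g x \<partial>M"
  have eq: "(\<integral>x. (f n x)\<^sup>2 \<partial>M) = (\<integral>x. (g x)\<^sup>2 \<partial>M) + ?d n + 2 * ?c n" for n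
  proof -
    have i1: "integrable M (\<lambda>x. (f n x - g x)\<^sup>2)" using L2_diff[OF f g] unfolding L2_def by simp
    have i2: "integrable M (\<lambda>x. (f n x - g x) * g x)" by (rule L2_mult_integrable[OF L2_diff[OF f g] g])
    have i3: "integrable M (\<lambda>x. (g x)\<^sup>2)" using g unfolding L2_def by simp
    have "(\<integral>x. (f n x)\<^sup>2 \<partial>M) = (\<integral>x. (g x)\<^sup>2 + (f n x - g x)\<^sup>2 + 2 * ((f n x - g x) * g x) \<partial>M)"
      by (intro Bochner_Integration.integral_cong) (auto simp: power2_eq_square algebra_simps)
    also have "\<dots> = (\<integral>x. (g x)\<^sup>2 \<partial>M) + ?d n + 2 * ?c n" using i1 i2 i3 by simp
    finally show ?thesis .
  qed
  have "?c \<longlonglongrightarrow> 0"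
  proof (rule sq_bound_tendsto[OF d, of "\<integral>x. (g x)\<^sup>2 \<partial>M"])
    show "0 \<le> (\<integral>x. (g x)\<^sup>2 \<partial>M)" by simp
    fix n
    have "(?c n)\<^sup>2 \<le> ?d n * (\<integral>x. (g x)\<^sup>2 \<partial>M)" by (rule L2_CS[OF L2_diff[OF f g] g])
    then show "(?c n - 0)\<^sup>2 \<le> (\<integral>x. (g x)\<^sup>2 \<partial>M) * ?d n" by (simp add: mult.commute)
  qed
  then have "(\<lambda>n. (\<integral>x. (g x)\<^sup>2 \<partial>M) + ?d n + 2 * ?c n) \<longlonglongrightarrow> (\<integral>x. (g x)\<^sup>2 \<partial>M) + 0 + 2 * 0"
    by (intro tendsto_intros d)
  then show ?thesis unfolding eq by simp
qed

context rk begin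

lemma H_sq_tendsto:
  assumes f: "\<And>n. f n \<in> H" and g: "g \<in> H"
    and d: "(\<lambda>n. ip (\<lambda>x. f n x - g x) (\<lambda>x. f n x - g x)) \<longlonglongrightarrow> 0"
  shows "(\<lambda>n. ip (f n) (f n)) \<longlonglongrightarrow> ip g g"
proof -
  let ?e = "\<lambda>n. (\<lambda>x. f n x - g x)"
  have e: "?e n \<in> H" for n using f g by (rule H_diff)
  have eq: "ip (f n) (f n) = ip g g + 2 * ip g (?e n) + ip (?e n) (?e n)" for n
  proof -
    have "(\<lambda>x. g x + 1 * ?e n x) = f n" by auto
    then show ?thesis using ip_lin[OF g e, of 1] by simp
  qed
  have "(\<lambda>n. ip g (?e n)) \<longlonglongrightarrow> 0"
  proof (rule sq_bound_tendsto[OF d, of "ip g g"])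
    show "0 \<le> ip g g" by (rule ip_pos[OF g])
    fix n show "(ip g (?e n) - 0)\<^sup>2 \<le> ip g g * ip (?e n) (?e n)" using ip_CS[OF g e] by simp
  qed
  then have "(\<lambda>n. ip g g + 2 * ip g (?e n) + ip (?e n) (?e n)) \<longlonglongrightarrow> ip g g + 2 * 0 + 0"
    by (intro tendsto_intros d)
  then show ?thesis unfolding eq by simp
qed

lemma L2_to_H:
  assumes \<phi>: "L2 M \<phi>"
  shows "\<exists>G\<in>H. (\<forall>A\<in>fin_sets M. G A = (\<integral>x. indicator A x * \<phi> x \<partial>M)) \<and> ip G G = (\<integral>x. (\<phi> x)\<^sup>2 \<partial>M)"
proof -
  obtain rs where rs: "\<And>n. valid M (rs n)" and d: "(\<lambda>n. \<integral>x. (psi (rs n) x - \<phi> x)\<^sup>2 \<partial>M) \<longlonglongrightarrow> 0"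
    using L2_approx[OF \<phi>] by blast
  define g where "g n = gr M (rs n)" for n
  have gH: "g n \<in> H" for n unfolding g_def by (rule gr_H[OF rs])
  have Lp: "L2 M (psi (rs n))" for n by (rule L2_psi[OF rs])
  have "\<exists>N. \<forall>m\<ge>N. \<forall>n\<ge>N. ip (\<lambda>x. g m x - g n x) (\<lambda>x. g m x - g n x) < e" if e: "e > 0" for e
  proof -
    obtain N where N: "\<And>n. n \<ge> N \<Longrightarrow> \<bar>(\<integral>x. (psi (rs n) x - \<phi> x)\<^sup>2 \<partial>M) - 0\<bar> < e / 4"
      using LIMSEQ_D[OF d, of "e/4"] e by auto
    have "ip (\<lambda>x. g m x - g n x) (\<lambda>x. g m x - g n x) < e" if mn: "m \<ge> N" "n \<ge> N" for m n
    proof -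
      have "ip (\<lambda>x. g m x - g n x) (\<lambda>x. g m x - g n x) = (\<integral>x. (psi (rs m) x - psi (rs n) x)\<^sup>2 \<partial>M)"
        unfolding g_def by (rule ip_gr_diff[OF rs rs])
      also have "\<dots> \<le> (\<integral>x. 2 * (psi (rs m) x - \<phi> x)\<^sup>2 + 2 * (psi (rs n) x - \<phi> x)\<^sup>2 \<partial>M)"
      proof (rule integral_mono)
        show "integrable M (\<lambda>x. (psi (rs m) x - psi (rs n) x)\<^sup>2)"
          using L2_diff[OF Lp Lp] unfolding L2_def by blast
        show "integrable M (\<lambda>x. 2 * (psi (rs m) x - \<phi> x)\<^sup>2 + 2 * (psi (rs n) x - \<phi> x)\<^sup>2)"
          using L2_diff[OF Lp \<phi>, of m] L2_diff[OF Lp \<phi>, of n] unfolding L2_def by auto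
        fix x
        have "0 \<le> (psi (rs m) x + psi (rs n) x - 2 * \<phi> x)\<^sup>2" by simp
        then show "(psi (rs m) x - psi (rs n) x)\<^sup>2 \<le> 2 * (psi (rs m) x - \<phi> x)\<^sup>2 + 2 * (psi (rs n) x - \<phi> x)\<^sup>2"
          by (simp add: power2_eq_square algebra_simps)
      qed
      also have "\<dots> = 2 * (\<integral>x. (psi (rs m) x - \<phi> x)\<^sup>2 \<partial>M) + 2 * (\<integral>x. (psi (rs n) x - \<phi> x)\<^sup>2 \<partial>M)"
        using L2_diff[OF Lp \<phi>, of m] L2_diff[OF Lp \<phi>, of n] unfolding L2_def by simp
      also have "\<dots> < e" using N[OF mn(1)] N[OF mn(2)] by simp
      finally show ?thesis .
    qed
    then show ?thesis by blast
  qed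
  then obtain G where G: "G \<in> H" and dG: "(\<lambda>n. ip (\<lambda>x. g n x - G x) (\<lambda>x. g n x - G x)) \<longlonglongrightarrow> 0"
    using H_complete[of g] gH by blast
  have GA: "G A = (\<integral>x. indicator A x * \<phi> x \<partial>M)" if A: "A \<in> fin_sets M" for A
  proof -
    have t1: "(\<lambda>n. g n A) \<longlonglongrightarrow> G A"
    proof (rule sq_bound_tendsto[OF dG, of "measure M A"])
      show "0 \<le> measure M A" by simp
      fix n
      have e: "(\<lambda>x. g n x - G x) \<in> H" using gH G by (rule H_diff)
      have "g n A - G A = ip (\<lambda>x. g n x - G x) (kk M A)" using reprod[OF e A] by simp
      moreover have "ip (kk M A) (kk M A) = measure M A"
        using ip_kk[OF A kk_H[OF A]] A by (simp add: kk_def mu_kernel_def)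
      ultimately show "(g n A - G A)\<^sup>2 \<le> measure M A * ip (\<lambda>x. g n x - G x) (\<lambda>x. g n x - G x)"
        using ip_CS[OF e kk_H[OF A]] by (simp add: mult.commute)
    qed
    have t2: "(\<lambda>n. g n A) \<longlonglongrightarrow> (\<integral>x. indicator A x * \<phi> x \<partial>M)"
    proof (rule sq_bound_tendsto[OF d, of "measure M A"])
      show "0 \<le> measure M A" by simp
      fix n
      have "g n A = (\<integral>x. indicator A x * psi (rs n) x \<partial>M)"
        unfolding g_def by (rule int_ind_psi[OF A rs, symmetric])
      then show "(g n A - (\<integral>x. indicator A x * \<phi> x \<partial>M))\<^sup>2 \<le> measure M A * (\<integral>x. (psi (rs n) x - \<phi> x)\<^sup>2 \<partial>M)"
        using L2_ind_diff_bound[OF A Lp \<phi>] by simp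
    qed
    show ?thesis using LIMSEQ_unique[OF t1 t2] .
  qed
  have "(\<lambda>n. ip (g n) (g n)) \<longlonglongrightarrow> ip G G" by (rule H_sq_tendsto[OF gH G dG])
  moreover have "ip (g n) (g n) = (\<integral>x. (psi (rs n) x)\<^sup>2 \<partial>M)" for n
    unfolding g_def by (rule ip_gr_gr[OF rs])
  moreover have "(\<lambda>n. \<integral>x. (psi (rs n) x)\<^sup>2 \<partial>M) \<longlonglongrightarrow> (\<integral>x. (\<phi> x)\<^sup>2 \<partial>M)"
    by (rule L2_sq_tendsto[OF Lp \<phi> d])
  ultimately have "ip G G = (\<integral>x. (\<phi> x)\<^sup>2 \<partial>M)" using LIMSEQ_unique by auto
  with G GA show ?thesis by blast
qed

end

context rk begin

definition Q :: "('a set \<Rightarrow> real) \<Rightarrow> (real \<times> 'a set) list \<Rightarrow> real" where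
  "Q F r = (\<integral>x. (psi r x)\<^sup>2 \<partial>M) - 2 * ell F r"

lemma Q_lower: assumes F: "F \<in> H" and r: "valid M r" shows "- ip F F \<le> Q F r"
proof -
  have g: "gr M r \<in> H" by (rule gr_H[OF r])
  have "0 \<le> ip (\<lambda>x. gr M r x + (-1) * F x) (\<lambda>x. gr M r x + (-1) * F x)"
    using g F by (intro ip_pos H_add H_smult)
  also have "\<dots> = ip (gr M r) (gr M r) - 2 * ip (gr M r) F + ip F F"
    using ip_lin[OF g F, of "-1"] by simp
  also have "\<dots> = Q F r + ip F F"
    unfolding Q_def using ip_gr_gr[OF r] ip_gr[OF r F] by simp
  finally show ?thesis by simp
qed

lemma Q_parallel:
  assumes r: "valid M r" and s: "valid M s"
  shows "Q F r + Q F s - 2 * Q F (scl (1/2) (r @ s)) = (\<integral>x. (psi r x - psi s x)\<^sup>2 \<partial>M) / 2"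
proof -
  have Lr: "L2 M (psi r)" and Ls: "L2 M (psi s)" using L2_psi r s by auto
  have pm: "psi (scl (1/2) (r @ s)) x = (psi r x + psi s x) / 2" for x
    by (simp add: psi_scl psi_append)
  have em: "ell F (scl (1/2) (r @ s)) = (ell F r + ell F s) / 2"
    by (simp add: ell_scl ell_append)
  have i1: "integrable M (\<lambda>x. (psi r x)\<^sup>2)" "integrable M (\<lambda>x. (psi s x)\<^sup>2)"
    "integrable M (\<lambda>x. psi r x * psi s x)"
    using Lr Ls L2_mult_integrable[OF Lr Ls] unfolding L2_def by auto
  have "(\<integral>x. ((psi r x + psi s x) / 2)\<^sup>2 \<partial>M)
      = (\<integral>x. (psi r x)\<^sup>2 / 4 + (psi s x)\<^sup>2 / 4 + (psi r x * psi s x) / 2 \<partial>M)"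
    by (intro Bochner_Integration.integral_cong) (auto simp: power2_eq_square field_simps)
  also have "\<dots> = (\<integral>x. (psi r x)\<^sup>2 \<partial>M) / 4 + (\<integral>x. (psi s x)\<^sup>2 \<partial>M) / 4 + (\<integral>x. psi r x * psi s x \<partial>M) / 2"
    using i1 by simp
  finally have a: "(\<integral>x. ((psi r x + psi s x) / 2)\<^sup>2 \<partial>M) = \<dots>" .
  have "(\<integral>x. (psi r x - psi s x)\<^sup>2 \<partial>M) = (\<integral>x. (psi r x)\<^sup>2 + (psi s x)\<^sup>2 - 2 * (psi r x * psi s x) \<partial>M)"
    by (intro Bochner_Integration.integral_cong) (auto simp: power2_eq_square field_simps)
  also have "\<dots> = (\<integral>x. (psi r x)\<^sup>2 \<partial>M) + (\<integral>x. (psi s x)\<^sup>2 \<partial>M) - 2 * (\<integral>x. psi r x * psi s x \<partial>M)"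
    using i1 by simp
  finally have b: "(\<integral>x. (psi r x - psi s x)\<^sup>2 \<partial>M) = \<dots>" .
  show ?thesis unfolding Q_def pm em a b by (simp add: field_simps)
qed

lemma Q_add_ind:
  assumes r: "valid M r" and B: "B \<in> fin_sets M"
  shows "Q F (r @ [(t, B)]) = Q F r + 2 * t * (\<integral>x. indicator B x * psi r x \<partial>M) + t\<^sup>2 * measure M B - 2 * t * F B"
proof -
  have Lr: "L2 M (psi r)" using L2_psi r by auto
  have i1: "integrable M (\<lambda>x. (psi r x)\<^sup>2)" "integrable M (\<lambda>x. indicator B x * psi r x)"
    "integrable M (\<lambda>x. indicator B x * indicator B x :: real)"
    using Lr L2_mult_integrable[OF L2_indicator[OF B] Lr]
      L2_mult_integrable[OF L2_indicator[OF B] L2_indicator[OF B]] unfolding L2_def by auto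
  have "(\<integral>x. (psi (r @ [(t, B)]) x)\<^sup>2 \<partial>M)
     = (\<integral>x. (psi r x)\<^sup>2 + 2 * t * (indicator B x * psi r x) + t\<^sup>2 * (indicator B x * indicator B x) \<partial>M)"
    by (intro Bochner_Integration.integral_cong) (auto simp: psi_append power2_eq_square algebra_simps)
  also have "\<dots> = (\<integral>x. (psi r x)\<^sup>2 \<partial>M) + 2 * t * (\<integral>x. indicator B x * psi r x \<partial>M) + t\<^sup>2 * measure M B"
    using i1 int_ind_ind[OF B B] by simp
  finally show ?thesis unfolding Q_def by (simp add: ell_append algebra_simps)
qed

lemma H_to_L2:
  assumes F: "F \<in> H"
  shows "\<exists>\<phi>. L2 M \<phi> \<and> (\<forall>A\<in>fin_sets M. F A = (\<integral>x. indicator A x * \<phi> x \<partial>M))"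
proof -
  interpret sigma_finite_measure M by (rule sf)
  define q where "q = Inf (Q F ` {r. valid M r})"
  have ne: "Q F ` {r. valid M r} \<noteq> {}" using valid_Nil by blast
  have bdd: "bdd_below (Q F ` {r. valid M r})"
    using Q_lower[OF F] by (intro bdd_belowI[of _ "- ip F F"]) auto
  have qle: "q \<le> Q F r" if "valid M r" for r
    unfolding q_def using bdd that by (intro cInf_lower) auto
  have "\<exists>r. valid M r \<and> Q F r < q + 1 / (real n + 1)" for n
  proof -
    have "Inf (Q F ` {r. valid M r}) < q + 1 / (real n + 1)" unfolding q_def by simp
    then obtain y where "y \<in> Q F ` {r. valid M r}" "y < q + 1 / (real n + 1)"
      using cInf_lessD[OF ne] by blast
    then show ?thesis by blast
  qed
  then have "\<forall>n. \<exists>r. valid M r \<and> Q F r < q + 1 / (real n + 1)" by blast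
  then have "\<exists>rs. \<forall>n. valid M (rs n) \<and> Q F (rs n) < q + 1 / (real n + 1)" by (rule choice)
  then obtain rs where rs0: "\<forall>n. valid M (rs n) \<and> Q F (rs n) < q + 1 / (real n + 1)" by blast
  then have rs: "\<And>n. valid M (rs n)" and rsQ: "\<And>n. Q F (rs n) < q + 1 / (real n + 1)" by auto
  have Lp: "L2 M (psi (rs n))" for n by (rule L2_psi[OF rs])
  have cauchy: "\<exists>N. \<forall>m\<ge>N. \<forall>n\<ge>N. (\<integral>x. (psi (rs m) x - psi (rs n) x)\<^sup>2 \<partial>M) < e" if e: "e > 0" for e
  proof -
    obtain N :: nat where N: "4 / e < real N" using reals_Archimedean2 by blast
    have N1: "4 / (real N + 1) < e" using N e by (simp add: field_simps)
    have "(\<integral>x. (psi (rs m) x - psi (rs n) x)\<^sup>2 \<partial>M) < e" if mn: "m \<ge> N" "n \<ge> N" for m n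
    proof -
      have v: "valid M (scl (1/2) (rs m @ rs n))" using rs by (simp add: valid_scl valid_append)
      have "(\<integral>x. (psi (rs m) x - psi (rs n) x)\<^sup>2 \<partial>M) / 2 = Q F (rs m) + Q F (rs n) - 2 * Q F (scl (1/2) (rs m @ rs n))"
        using Q_parallel[OF rs rs] by simp
      also have "\<dots> \<le> Q F (rs m) + Q F (rs n) - 2 * q" using qle[OF v] by simp
      also have "\<dots> < 1 / (real m + 1) + 1 / (real n + 1)" using rsQ[of m] rsQ[of n] by simp
      also have "\<dots> \<le> 1 / (real N + 1) + 1 / (real N + 1)"
        using mn by (intro add_mono divide_left_mono) auto
      finally show ?thesis using N1 by simp
    qed
    then show ?thesis by blast
  qed
  obtain \<phi> where \<phi>: "L2 M \<phi>" and d: "(\<lambda>n. \<integral>x. (psi (rs n) x - \<phi> x)\<^sup>2 \<partial>M) \<longlonglongrightarrow> 0"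
    using L2_complete[OF Lp cauchy] by blast
  have Qlim: "(\<lambda>n. Q F (rs n)) \<longlonglongrightarrow> q"
  proof (rule tendsto_sandwich[of "\<lambda>n. q" _ _ "\<lambda>n. q + 1 / (real n + 1)"])
    show "\<forall>\<^sub>F n in sequentially. q \<le> Q F (rs n)" using qle[OF rs] by simp
    show "\<forall>\<^sub>F n in sequentially. Q F (rs n) \<le> q + 1 / (real n + 1)" using rsQ by (intro always_eventually allI less_imp_le) auto
    show "(\<lambda>n. q) \<longlonglongrightarrow> q" by simp
    have "(\<lambda>n. inverse (real (Suc n))) \<longlonglongrightarrow> 0" by (rule LIMSEQ_inverse_real_of_nat)
    then have "(\<lambda>n. 1 / (real n + 1)) \<longlonglongrightarrow> 0" by (simp add: inverse_eq_divide add.commute)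
    then have "(\<lambda>n. q + 1 / (real n + 1)) \<longlonglongrightarrow> q + 0"
      by (intro tendsto_intros)
    then show "(\<lambda>n. q + 1 / (real n + 1)) \<longlonglongrightarrow> q" by simp
  qed
  have "F B = (\<integral>x. indicator B x * \<phi> x \<partial>M)" if B: "B \<in> fin_sets M" for B
  proof -
    let ?a = "(\<integral>x. indicator B x * \<phi> x \<partial>M)"
    have t2: "(\<lambda>n. \<integral>x. indicator B x * psi (rs n) x \<partial>M) \<longlonglongrightarrow> ?a"
    proof (rule sq_bound_tendsto[OF d, of "measure M B"])
      show "0 \<le> measure M B" by simp
      fix n show "((\<integral>x. indicator B x * psi (rs n) x \<partial>M) - ?a)\<^sup>2 \<le> measure M B * (\<integral>x. (psi (rs n) x - \<phi> x)\<^sup>2 \<partial>M)"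
        using L2_ind_diff_bound[OF B Lp \<phi>] by simp
    qed
    have "0 \<le> 0 - 2 * t * (F B - ?a) + t\<^sup>2 * measure M B" for t
    proof -
      have "(\<lambda>n. Q F (rs n) + 2 * t * (\<integral>x. indicator B x * psi (rs n) x \<partial>M) + t\<^sup>2 * measure M B - 2 * t * F B)
            \<longlonglongrightarrow> q + 2 * t * ?a + t\<^sup>2 * measure M B - 2 * t * F B"
        by (intro tendsto_intros Qlim t2)
      moreover have "\<exists>N. \<forall>n\<ge>N. q \<le> Q F (rs n) + 2 * t * (\<integral>x. indicator B x * psi (rs n) x \<partial>M) + t\<^sup>2 * measure M B - 2 * t * F B"
      proof (intro exI allI impI)
        fix n
        have "valid M (rs n @ [(t, B)])" using rs B by (simp add: valid_append valid_Cons valid_Nil)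
        from qle[OF this] show "q \<le> Q F (rs n) + 2 * t * (\<integral>x. indicator B x * psi (rs n) x \<partial>M) + t\<^sup>2 * measure M B - 2 * t * F B"
          using Q_add_ind[OF rs B] by simp
      qed
      ultimately have "q \<le> q + 2 * t * ?a + t\<^sup>2 * measure M B - 2 * t * F B" by (rule LIMSEQ_le_const)
      then show ?thesis by (simp add: algebra_simps)
    qed
    then have "(F B - ?a)\<^sup>2 \<le> 0 * measure M B" by (intro quad_nonneg_imp) auto
    then show ?thesis by simp
  qed
  with \<phi> show ?thesis by blast
qed

end

lemma (in sigma_finite_measure) L2_nonpos:
  assumes h: "L2 M h" and z: "\<And>A. A \<in> fin_sets M \<Longrightarrow> (\<integral>x. indicator A x * h x \<partial>M) = 0"
  shows "AE x in M. h x \<le> 0"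
proof -
  obtain A :: "nat \<Rightarrow> 'a set" where A: "range A \<subseteq> sets M" "(\<Union>i. A i) = space M" "\<And>i. emeasure M (A i) \<noteq> \<infinity>"
    using sigma_finite by blast
  have hm: "h \<in> borel_measurable M" using h unfolding L2_def by simp
  have "AE x in M. x \<in> A i \<longrightarrow> h x \<le> 0" for i
  proof -
    define P where "P = {x \<in> space M. 0 < h x} \<inter> A i"
    have Ps: "P \<in> sets M" unfolding P_def using A(1) hm by auto
    have mle: "emeasure M P \<le> emeasure M (A i)" unfolding P_def using A(1) by (intro emeasure_mono) auto
    have "emeasure M (A i) < \<infinity>" using A(3)[of i] by (simp add: less_top)
    then have "emeasure M P < \<infinity>" by (rule le_less_trans[OF mle])
    then have P: "P \<in> fin_sets M" unfolding fin_sets_def using Ps by simp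
    have int: "integrable M (\<lambda>x. indicator P x * h x)" by (rule L2_mult_integrable[OF L2_indicator[OF P] h])
    have "AE x in M. indicator P x * h x = 0"
      using integral_nonneg_eq_0_iff_AE[OF int] z[OF P] by (auto simp: P_def indicator_def)
    then show ?thesis
    proof (rule AE_mp, intro AE_I2 impI)
      fix x assume x: "x \<in> space M" and e: "indicator P x * h x = 0" and xa: "x \<in> A i"
      show "h x \<le> 0"
      proof (rule ccontr)
        assume "\<not> h x \<le> 0"
        then have "x \<in> P" using x xa unfolding P_def by auto
        then show False using e \<open>\<not> h x \<le> 0\<close> by simp
      qed
    qed
  qed
  then have "\<forall>i. AE x in M. x \<in> A i \<longrightarrow> h x \<le> 0" by blast
  then have "AE x in M. \<forall>i. x \<in> A i \<longrightarrow> h x \<le> 0" by (rule AE_all_countable[THEN iffD2])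
  then show ?thesis
  proof (rule AE_mp, intro AE_I2 impI)
    fix x assume x: "x \<in> space M" and a: "\<forall>i. x \<in> A i \<longrightarrow> h x \<le> 0"
    from x A(2) obtain i where "x \<in> A i" by blast
    with a show "h x \<le> 0" by blast
  qed
qed

lemma (in sigma_finite_measure) L2_unique:
  assumes f: "L2 M f" and g: "L2 M g"
    and z: "\<And>A. A \<in> fin_sets M \<Longrightarrow> (\<integral>x. indicator A x * f x \<partial>M) = (\<integral>x. indicator A x * g x \<partial>M)"
  shows "AE x in M. f x = g x"
proof -
  have h: "L2 M (\<lambda>x. f x - g x)" by (rule L2_diff[OF f g])
  have h': "L2 M (\<lambda>x. g x - f x)" by (rule L2_diff[OF g f])
  have z1: "(\<integral>x. indicator A x * (f x - g x) \<partial>M) = 0" if A: "A \<in> fin_sets M" for A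
  proof -
    have "(\<integral>x. indicator A x * (f x - g x) \<partial>M) = (\<integral>x. indicator A x * f x \<partial>M) - (\<integral>x. indicator A x * g x \<partial>M)"
      using L2_mult_integrable[OF L2_indicator[OF A] f] L2_mult_integrable[OF L2_indicator[OF A] g]
      by (simp add: right_diff_distrib)
    then show ?thesis using z[OF A] by simp
  qed
  have z2: "(\<integral>x. indicator A x * (g x - f x) \<partial>M) = 0" if A: "A \<in> fin_sets M" for A
  proof -
    have "(\<lambda>x. indicator A x * (g x - f x)) = (\<lambda>x. - (indicator A x * (f x - g x) :: real))"
      by (auto simp: algebra_simps)
    then have "(\<integral>x. indicator A x * (g x - f x) \<partial>M) = - (\<integral>x. indicator A x * (f x - g x) \<partial>M)"
      by (simp only: Bochner_Integration.integral_minus)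
    then show ?thesis using z1[OF A] by simp
  qed
  have "AE x in M. f x - g x \<le> 0" by (rule L2_nonpos[OF h z1])
  moreover have "AE x in M. g x - f x \<le> 0" by (rule L2_nonpos[OF h' z2])
  ultimately show ?thesis by eventually_elim simp
qed

lemma L2_density_iff:
  "L2_density M F \<phi> \<longleftrightarrow> L2 M \<phi> \<and> (\<forall>A\<in>fin_sets M. F A = (\<integral>x. indicator A x * \<phi> x \<partial>M))"
  unfolding L2_density_def L2_def set_lebesgue_integral_def by simp

lemma countable_add_L2:
  fixes A :: "nat \<Rightarrow> 'a set"
  assumes \<phi>: "L2 M \<phi>" and A: "\<And>i. A i \<in> fin_sets M" and dj: "disjoint_family A"
    and U: "(\<Union>i. A i) \<in> fin_sets M"
  shows "(\<lambda>i. \<integral>x. indicator (A i) x * \<phi> x \<partial>M) sums (\<integral>x. indicator (\<Union>i. A i) x * \<phi> x \<partial>M)"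
proof -
  have \<phi>m: "\<phi> \<in> borel_measurable M" using \<phi> unfolding L2_def by simp
  have As: "A i \<in> sets M" for i using A unfolding fin_sets_def by auto
  have isum: "(\<lambda>i. indicator (A i) x :: real) sums indicator (\<Union>i. A i) x" for x
    by (rule indicator_sums) (use dj in \<open>auto simp: disjoint_family_on_def\<close>)
  have eq: "(\<Sum>i<n. \<integral>x. indicator (A i) x * \<phi> x \<partial>M) = (\<integral>x. (\<Sum>i<n. indicator (A i) x) * \<phi> x \<partial>M)" for n
  proof -
    have "(\<Sum>i<n. \<integral>x. indicator (A i) x * \<phi> x \<partial>M) = (\<integral>x. (\<Sum>i<n. indicator (A i) x * \<phi> x) \<partial>M)"
      using Bochner_Integration.integral_sum[where I="{..<n}" and f="\<lambda>i x. indicator (A i) x * \<phi> x"]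
        L2_mult_integrable[OF L2_indicator[OF A] \<phi>] by simp
    then show ?thesis by (simp add: sum_distrib_right)
  qed
  have "(\<lambda>n. \<integral>x. (\<Sum>i<n. indicator (A i) x) * \<phi> x \<partial>M) \<longlonglongrightarrow> (\<integral>x. indicator (\<Union>i. A i) x * \<phi> x \<partial>M)"
  proof (rule integral_dominated_convergence[where w="\<lambda>x. \<bar>indicator (\<Union>i. A i) x * \<phi> x\<bar>"])
    show "(\<lambda>x. indicator (\<Union>i. A i) x * \<phi> x) \<in> borel_measurable M"
      using L2_mult_integrable[OF L2_indicator[OF U] \<phi>] by auto
    show "(\<lambda>x. (\<Sum>i<n. indicator (A i) x) * \<phi> x) \<in> borel_measurable M" for n
      using As \<phi>m by measurable
    show "integrable M (\<lambda>x. \<bar>indicator (\<Union>i. A i) x * \<phi> x\<bar>)"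
      using L2_mult_integrable[OF L2_indicator[OF U] \<phi>] by auto
    show "AE x in M. (\<lambda>n. (\<Sum>i<n. indicator (A i) x) * \<phi> x) \<longlonglongrightarrow> indicator (\<Union>i. A i) x * \<phi> x"
      using isum by (intro AE_I2 tendsto_intros) (simp add: sums_def)
    show "AE x in M. norm ((\<Sum>i<n. indicator (A i) x) * \<phi> x) \<le> \<bar>indicator (\<Union>i. A i) x * \<phi> x\<bar>" for n
    proof (rule AE_I2)
      fix x
      have le: "(\<Sum>i<n. indicator (A i) x :: real) \<le> indicator (\<Union>i. A i) x"
        using sum_le_suminf[OF sums_summable[OF isum], of "{..<n}"] sums_unique[OF isum] by auto
      have ge: "0 \<le> (\<Sum>i<n. indicator (A i) x :: real)" by (simp add: sum_nonneg)
      have "\<bar>(\<Sum>i<n. indicator (A i) x) * \<phi> x\<bar> = (\<Sum>i<n. indicator (A i) x) * \<bar>\<phi> x\<bar>"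
        using ge by (simp add: abs_mult)
      also have "\<dots> \<le> indicator (\<Union>i. A i) x * \<bar>\<phi> x\<bar>" using le by (rule mult_right_mono) simp
      finally show "norm ((\<Sum>i<n. indicator (A i) x) * \<phi> x) \<le> \<bar>indicator (\<Union>i. A i) x * \<phi> x\<bar>"
        by (simp add: abs_mult)
    qed
  qed
  then show ?thesis unfolding sums_def eq .
qed

theorem mainTheorem2:
  fixes M :: "'a measure"
    and H :: "('a set \<Rightarrow> real) set"
    and ip :: "('a set \<Rightarrow> real) \<Rightarrow> ('a set \<Rightarrow> real) \<Rightarrow> real"
  assumes "sigma_finite_measure M"
    and "is_rkhs (fin_sets M) (mu_kernel M) H ip"
  shows "(\<forall>F \<in> extensional (fin_sets M). F \<in> H \<longleftrightarrow> (\<exists>\<phi>. L2_density M F \<phi>)) \<and>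
         (\<forall>F \<in> H. \<forall>\<phi> \<psi>. L2_density M F \<phi> \<and> L2_density M F \<psi> \<longrightarrow> (AE x in M. \<phi> x = \<psi> x)) \<and>
         (\<forall>F \<in> H. \<forall>\<phi>. L2_density M F \<phi> \<longrightarrow> sqrt (ip F F) = sqrt (\<integral>x. (\<phi> x)\<^sup>2 \<partial>M)) \<and>
         (\<forall>F \<in> H. \<forall>A :: nat \<Rightarrow> 'a set. (\<forall>i. A i \<in> fin_sets M) \<and> disjoint_family A \<and>
            (\<Union>i. A i) \<in> fin_sets M \<longrightarrow> (\<lambda>i. F (A i)) sums F (\<Union>i. A i)) \<and>
         (\<forall>F \<in> H. \<forall>A \<in> fin_sets M. emeasure M A = 0 \<longrightarrow> F A = 0)"
proof -
  interpret rk M H ip by (rule rk.intro[OF assms])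
  interpret sigma_finite_measure M by (rule assms(1))
  have same: "F = G" if "F \<in> extensional (fin_sets M)" "G \<in> extensional (fin_sets M)"
    "\<And>A. A \<in> fin_sets M \<Longrightarrow> F A = G A" for F G :: "'a set \<Rightarrow> real"
    using that by (rule extensionalityI)
  have c1: "\<forall>F \<in> extensional (fin_sets M). F \<in> H \<longleftrightarrow> (\<exists>\<phi>. L2_density M F \<phi>)"
  proof (intro ballI iffI)
    fix F assume "F \<in> H"
    then show "\<exists>\<phi>. L2_density M F \<phi>" using H_to_L2 by (auto simp: L2_density_iff)
  next
    fix F assume F: "F \<in> extensional (fin_sets M)" and "\<exists>\<phi>. L2_density M F \<phi>"
    then obtain \<phi> where \<phi>: "L2 M \<phi>" "\<And>A. A \<in> fin_sets M \<Longrightarrow> F A = (\<integral>x. indicator A x * \<phi> x \<partial>M)"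
      by (auto simp: L2_density_iff)
    obtain G where G: "G \<in> H" "\<And>A. A \<in> fin_sets M \<Longrightarrow> G A = (\<integral>x. indicator A x * \<phi> x \<partial>M)"
      using L2_to_H[OF \<phi>(1)] by blast
    have "F = G" using F H_ext G \<phi>(2) by (intro same) auto
    then show "F \<in> H" using G by simp
  qed
  have c2: "\<forall>F \<in> H. \<forall>\<phi> \<psi>. L2_density M F \<phi> \<and> L2_density M F \<psi> \<longrightarrow> (AE x in M. \<phi> x = \<psi> x)"
    by (auto simp: L2_density_iff intro!: L2_unique)
  have c3: "\<forall>F \<in> H. \<forall>\<phi>. L2_density M F \<phi> \<longrightarrow> sqrt (ip F F) = sqrt (\<integral>x. (\<phi> x)\<^sup>2 \<partial>M)"
  proof (intro ballI allI impI)
    fix F \<phi> assume F: "F \<in> H" and "L2_density M F \<phi>"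
    then have \<phi>: "L2 M \<phi>" "\<And>A. A \<in> fin_sets M \<Longrightarrow> F A = (\<integral>x. indicator A x * \<phi> x \<partial>M)"
      by (auto simp: L2_density_iff)
    obtain G where G: "G \<in> H" "\<And>A. A \<in> fin_sets M \<Longrightarrow> G A = (\<integral>x. indicator A x * \<phi> x \<partial>M)"
      "ip G G = (\<integral>x. (\<phi> x)\<^sup>2 \<partial>M)"
      using L2_to_H[OF \<phi>(1)] by blast
    have "F = G" using F H_ext G \<phi>(2) by (intro same) auto
    then show "sqrt (ip F F) = sqrt (\<integral>x. (\<phi> x)\<^sup>2 \<partial>M)" using G by simp
  qed
  have c4: "\<forall>F \<in> H. \<forall>A :: nat \<Rightarrow> 'a set. (\<forall>i. A i \<in> fin_sets M) \<and> disjoint_family A \<and>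
            (\<Union>i. A i) \<in> fin_sets M \<longrightarrow> (\<lambda>i. F (A i)) sums F (\<Union>i. A i)"
  proof (intro ballI allI impI)
    fix F and A :: "nat \<Rightarrow> 'a set"
    assume F: "F \<in> H" and A: "(\<forall>i. A i \<in> fin_sets M) \<and> disjoint_family A \<and> (\<Union>i. A i) \<in> fin_sets M"
    obtain \<phi> where \<phi>: "L2 M \<phi>" "\<And>A. A \<in> fin_sets M \<Longrightarrow> F A = (\<integral>x. indicator A x * \<phi> x \<partial>M)"
      using H_to_L2[OF F] by blast
    have "(\<lambda>i. \<integral>x. indicator (A i) x * \<phi> x \<partial>M) sums (\<integral>x. indicator (\<Union>i. A i) x * \<phi> x \<partial>M)"
      using A by (intro countable_add_L2[OF \<phi>(1)]) auto
    then show "(\<lambda>i. F (A i)) sums F (\<Union>i. A i)" using A \<phi>(2) by simp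
  qed
  have c5: "\<forall>F \<in> H. \<forall>A \<in> fin_sets M. emeasure M A = 0 \<longrightarrow> F A = 0"
  proof (intro ballI impI)
    fix F A assume F: "F \<in> H" and A: "A \<in> fin_sets M" and z: "emeasure M A = 0"
    obtain \<phi> where \<phi>: "L2 M \<phi>" "\<And>A. A \<in> fin_sets M \<Longrightarrow> F A = (\<integral>x. indicator A x * \<phi> x \<partial>M)"
      using H_to_L2[OF F] by blast
    have "A \<in> null_sets M" using A z unfolding fin_sets_def by auto
    then have "AE x in M. indicator A x * \<phi> x = 0"
      by (rule AE_I') (auto simp: indicator_def)
    then have "(\<integral>x. indicator A x * \<phi> x \<partial>M) = 0" by (rule integral_eq_zero_AE)
    then show "F A = 0" using \<phi>(2)[OF A] by simp
  qed
  show ?thesis using c1 c2 c3 c4 c5 by blast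
qed

end
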